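(* Fix $T\ge0$. For $k\in\mathbb N_+$ let $\xi^k=\xi^{(a,k,T)}$. Then for all integers $\ell\ge k\ge1$, almost surely $\xi^\ell_t\ge\xi^k_t$ for all $t\in[0,T]$.
   Context: Let $\lambda>0$ and let $N$ be a Poisson process with intensity $\lambda$, arrival times $0<\sigma_1<\sigma_2<\cdots$, and natural filtration $\mathcal F_t=\sigma(N_s:s\le t)$. Let $F:[0,\infty)\to[0,\infty)$ be strictly increasing and strictly convex with $F(0)=0$. For $k\in\{0,1,\dots\}$ let $\mathcal A_k$ be the set of $(\mathcal F_t)$-adapted, integer-valued, nonnegative, non-increasing processes $\xi$ with $\xi_0=k$ whose values change only at arrival times of $N$, and $v(k,T)=\inf_{\xi\in\mathcal A_k}\mathbb E[\sum_{i:\sigma_i\le T}F(\xi_{\sigma_i-}-\xi_{\sigma_i})+F(\xi_T)]$. For $k\in\mathbb N_+$, $a(k,T)$ is the smallest minimizer over $a\in\{1,\dots,k\}$ of $v(k-a,T)+F(a)$, and $a(0,T)=0$. The inventory process $\xi^{(a,k,T)}$ is defined by $\xi^{(a,k,T)}_0=k$, constant between arrival times, and at each arrival time $\sigma_i\le T$: $\xi^{(a,k,T)}_{\sigma_i}=\xi^{(a,k,T)}_{\sigma_i-}-a(\xi^{(a,k,T)}_{\sigma_i-},T-\sigma_i)$. *)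

theory Defs
  imports "HOL-Probability.Probability"
begin

definition strictly_convex_on :: "real set \<Rightarrow> (real \<Rightarrow> real) \<Rightarrow> bool" where
  "strictly_convex_on S f \<longleftrightarrow> convex S \<and>
     (\<forall>x\<in>S. \<forall>y\<in>S. \<forall>u::real. x \<noteq> y \<longrightarrow> 0 < u \<longrightarrow> u < 1 \<longrightarrow>
        f (u * x + (1 - u) * y) < u * f x + (1 - u) * f y)"

text \<open>Poisson process of intensity l given by its arrival times:
  sigma 0 = 0 (convention), sigma 1 < sigma 2 < ... are the arrival times, and the
  interarrival times sigma (Suc i) - sigma i are i.i.d. exponential with rate l.\<close>
definition poisson_arrivals :: "'a measure \<Rightarrow> real \<Rightarrow> (nat \<Rightarrow> 'a \<Rightarrow> real) \<Rightarrow> bool" where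
  "poisson_arrivals M l \<sigma> \<longleftrightarrow> prob_space M \<and> 0 < l \<and>
     (\<forall>\<omega>\<in>space M. \<sigma> 0 \<omega> = 0) \<and>
     prob_space.indep_vars M (\<lambda>_. borel) (\<lambda>i \<omega>. \<sigma> (Suc i) \<omega> - \<sigma> i \<omega>) UNIV \<and>
     (\<forall>i. distributed M lborel (\<lambda>\<omega>. \<sigma> (Suc i) \<omega> - \<sigma> i \<omega>) (exponential_density l))"

definition Ncount :: "(nat \<Rightarrow> 'a \<Rightarrow> real) \<Rightarrow> real \<Rightarrow> 'a \<Rightarrow> nat" where
  "Ncount \<sigma> t \<omega> = card {i. 0 < i \<and> \<sigma> i \<omega> \<le> t}"

definition natfilt :: "'a measure \<Rightarrow> (nat \<Rightarrow> 'a \<Rightarrow> real) \<Rightarrow> real \<Rightarrow> 'a measure" where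
  "natfilt M \<sigma> t = sigma (space M)
     {Ncount \<sigma> s -` A \<inter> space M | s A. 0 \<le> s \<and> s \<le> t}"

text \<open>Left limit xi_{t-} of a non-increasing nat-valued path (t > 0).\<close>
definition lft :: "(real \<Rightarrow> 'a \<Rightarrow> nat) \<Rightarrow> real \<Rightarrow> 'a \<Rightarrow> nat" where
  "lft \<xi> t \<omega> = (INF s\<in>{0..<t}. \<xi> s \<omega>)"

definition admissible :: "'a measure \<Rightarrow> (nat \<Rightarrow> 'a \<Rightarrow> real) \<Rightarrow> nat \<Rightarrow> (real \<Rightarrow> 'a \<Rightarrow> nat) \<Rightarrow> bool" where
  "admissible M \<sigma> k \<xi> \<longleftrightarrow>
     (\<forall>t\<ge>0. \<xi> t \<in> measurable (natfilt M \<sigma> t) (count_space UNIV)) \<and>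
     (\<forall>\<omega>\<in>space M. \<xi> 0 \<omega> = k) \<and>
     (\<forall>\<omega>\<in>space M. \<forall>s t. 0 \<le> s \<longrightarrow> s \<le> t \<longrightarrow> \<xi> t \<omega> \<le> \<xi> s \<omega>) \<and>
     (\<forall>\<omega>\<in>space M. \<forall>s t. 0 \<le> s \<longrightarrow> s < t \<longrightarrow> \<xi> s \<omega> \<noteq> \<xi> t \<omega> \<longrightarrow>
        (\<exists>i>0. s < \<sigma> i \<omega> \<and> \<sigma> i \<omega> \<le> t))"

definition cost :: "(real \<Rightarrow> real) \<Rightarrow> (nat \<Rightarrow> 'a \<Rightarrow> real) \<Rightarrow> real \<Rightarrow> (real \<Rightarrow> 'a \<Rightarrow> nat) \<Rightarrow> 'a \<Rightarrow> real" where
  "cost F \<sigma> T \<xi> \<omega> =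
     (\<Sum>i\<in>{i. 0 < i \<and> \<sigma> i \<omega> \<le> T}. F (real (lft \<xi> (\<sigma> i \<omega>) \<omega> - \<xi> (\<sigma> i \<omega>) \<omega>)))
     + F (real (\<xi> T \<omega>))"

definition vfun :: "'a measure \<Rightarrow> (nat \<Rightarrow> 'a \<Rightarrow> real) \<Rightarrow> (real \<Rightarrow> real) \<Rightarrow> nat \<Rightarrow> real \<Rightarrow> ennreal" where
  "vfun M \<sigma> F k T = (INF \<xi>\<in>{\<xi>. admissible M \<sigma> k \<xi>}. \<integral>\<^sup>+ \<omega>. ennreal (cost F \<sigma> T \<xi> \<omega>) \<partial>M)"

definition aopt :: "'a measure \<Rightarrow> (nat \<Rightarrow> 'a \<Rightarrow> real) \<Rightarrow> (real \<Rightarrow> real) \<Rightarrow> nat \<Rightarrow> real \<Rightarrow> nat" where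
  "aopt M \<sigma> F k T = (if k = 0 then 0 else
     (LEAST a. 1 \<le> a \<and> a \<le> k \<and>
        (\<forall>b\<in>{1..k}. vfun M \<sigma> F (k - a) T + ennreal (F (real a))
                     \<le> vfun M \<sigma> F (k - b) T + ennreal (F (real b)))))"

fun invseq :: "'a measure \<Rightarrow> (nat \<Rightarrow> 'a \<Rightarrow> real) \<Rightarrow> (real \<Rightarrow> real) \<Rightarrow> nat \<Rightarrow> real \<Rightarrow> 'a \<Rightarrow> nat \<Rightarrow> nat" where
  "invseq M \<sigma> F k T \<omega> 0 = k"
| "invseq M \<sigma> F k T \<omega> (Suc i) =
     (let x = invseq M \<sigma> F k T \<omega> i in
      if \<sigma> (Suc i) \<omega> \<le> T then x - aopt M \<sigma> F x (T - \<sigma> (Suc i) \<omega>) else x)"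

definition xiproc :: "'a measure \<Rightarrow> (nat \<Rightarrow> 'a \<Rightarrow> real) \<Rightarrow> (real \<Rightarrow> real) \<Rightarrow> nat \<Rightarrow> real \<Rightarrow> real \<Rightarrow> 'a \<Rightarrow> nat" where
  "xiproc M \<sigma> F k T t \<omega> = invseq M \<sigma> F k T \<omega> (Ncount \<sigma> t \<omega>)"

end

theory Submission
  imports Defs
begin

lemma convex_incr:
  fixes F :: "real \<Rightarrow> real" and x y :: real
  assumes sc: "strictly_convex_on {0..} F" and x: "0 \<le> x" and xy: "x < y"
  shows "F (x+1) + F y < F x + F (y+1)"
proof -
  define u where "u = (y-x)/(y+1-x)"
  define w where "w = 1/(y+1-x)"
  have d: "y+1-x > 0" using xy by simp
  have u01: "0 < u" "u < 1" using xy d by (auto simp: u_def field_simps)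
  have w01: "0 < w" "w < 1" using xy d by (auto simp: w_def field_simps)
  have ne: "x \<noteq> y+1" using xy by simp
  have dn: "y+1-x \<noteq> 0" using d by simp
  have e1: "u * x + (1-u)*(y+1) = x+1"
    unfolding u_def using dn by (simp add: divide_simps) (simp add: algebra_simps)
  have e2: "w * x + (1-w)*(y+1) = y"
    unfolding w_def using dn by (simp add: divide_simps) (simp add: algebra_simps)
  have uw: "u + w = 1" using d by (simp add: u_def w_def field_simps)
  have "F (u * x + (1-u)*(y+1)) < u * F x + (1-u) * F (y+1)"
    using sc x xy ne u01 unfolding strictly_convex_on_def by auto
  moreover have "F (w * x + (1-w)*(y+1)) < w * F x + (1-w) * F (y+1)"
    using sc x xy ne w01 unfolding strictly_convex_on_def by auto
  ultimately have "F (x+1) + F y < (u+w) * F x + (2 - (u+w)) * F (y+1)"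
    unfolding e1 e2 by (simp add: algebra_simps)
  thus ?thesis using uw by simp
qed

lemma pos_arrivals:
  assumes pa: "poisson_arrivals M l \<sigma>"
  shows "AE \<omega> in M. \<forall>i>0. 0 < \<sigma> i \<omega>"
proof -
  have ps: "prob_space M" using pa unfolding poisson_arrivals_def by simp
  have l: "0 < l" using pa unfolding poisson_arrivals_def by simp
  have inc: "AE \<omega> in M. 0 < \<sigma> (Suc i) \<omega> - \<sigma> i \<omega>" for i
  proof -
    have d: "distributed M lborel (\<lambda>\<omega>. \<sigma> (Suc i) \<omega> - \<sigma> i \<omega>) (exponential_density l)"
      using pa unfolding poisson_arrivals_def by simp
    have "AE x in lborel. 0 < exponential_density l x \<longrightarrow> 0 < x"
      using AE_lborel_singleton[of "0::real"]
      by eventually_elim (auto simp: exponential_density_def split: if_splits)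
    thus ?thesis using prob_space.distributed_AE2[OF ps d, of "\<lambda>x. 0 < x"] by simp
  qed
  have "AE \<omega> in M. \<forall>i. 0 < \<sigma> (Suc i) \<omega> - \<sigma> i \<omega>"
    using inc by (simp add: AE_all_countable)
  moreover have "AE \<omega> in M. \<sigma> 0 \<omega> = 0"
    using pa unfolding poisson_arrivals_def by (auto intro: AE_I2)
  ultimately show ?thesis
  proof eventually_elim
    case (elim \<omega>)
    have st: "\<sigma> i \<omega> < \<sigma> (Suc i) \<omega>" for i using elim(1) by simp
    have "0 < \<sigma> (Suc i) \<omega>" for i
    proof (induction i)
      case 0 thus ?case using st[of 0] elim(2) by simp
    next
      case (Suc i) thus ?case using st[of "Suc i"] by simp
    qed
    thus ?case by (metis gr0_implies_Suc)
  qed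
qed

lemma vfun_finite:
  assumes pa: "poisson_arrivals M l \<sigma>" and F0: "F 0 = 0"
  shows "vfun M \<sigma> F j T \<le> ennreal (F (real j))"
proof -
  have ps: "prob_space M" using pa unfolding poisson_arrivals_def by simp
  have adm: "admissible M \<sigma> j (\<lambda>_ _. j)"
    unfolding admissible_def by auto
  have c: "AE \<omega> in M. cost F \<sigma> T (\<lambda>_ _. j) \<omega> = F (real j)"
    using pos_arrivals[OF pa]
  proof eventually_elim
    case (elim \<omega>)
    have "lft (\<lambda>_ _. j) (\<sigma> i \<omega>) \<omega> = j" if "0 < i" for i
    proof -
      have "{0..<\<sigma> i \<omega>} \<noteq> {}" using elim that by auto
      thus ?thesis unfolding lft_def by simp
    qed
    thus ?case unfolding cost_def by (simp add: F0)
  qed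
  have "vfun M \<sigma> F j T \<le> (\<integral>\<^sup>+ \<omega>. ennreal (cost F \<sigma> T (\<lambda>_ _. j) \<omega>) \<partial>M)"
    unfolding vfun_def using adm by (intro INF_lower) auto
  also have "\<dots> = (\<integral>\<^sup>+ \<omega>. ennreal (F (real j)) \<partial>M)"
    by (rule nn_integral_cong_AE) (use c in auto)
  also have "\<dots> = ennreal (F (real j))"
    using ps by (simp add: prob_space.emeasure_space_1)
  finally show ?thesis .
qed

lemma vfun_real:
  assumes ps: "poisson_arrivals M l \<sigma>" and F0: "F 0 = 0"
  shows "vfun M \<sigma> F j T = ennreal (enn2real (vfun M \<sigma> F j T))"
proof -
  have "vfun M \<sigma> F j T < top"
    using vfun_finite[where F=F, OF ps F0, of j T] le_less_trans by fastforce
  thus ?thesis by simp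
qed

lemma aopt_prop:
  assumes "1 \<le> k"
  shows "1 \<le> aopt M \<sigma> F k T \<and> aopt M \<sigma> F k T \<le> k \<and>
     (\<forall>b\<in>{1..k}. vfun M \<sigma> F (k - aopt M \<sigma> F k T) T + ennreal (F (real (aopt M \<sigma> F k T)))
                     \<le> vfun M \<sigma> F (k - b) T + ennreal (F (real b)))"
proof -
  let ?g = "\<lambda>b. vfun M \<sigma> F (k - b) T + ennreal (F (real b))"
  have "finite {1..k}" "{1..k} \<noteq> {}" using assms by auto
  hence fin: "finite (?g ` {1..k})" "?g ` {1..k} \<noteq> {}" by auto
  have "Min (?g ` {1..k}) \<in> ?g ` {1..k}" using Min_in[OF fin] .
  then obtain a where a1: "a \<in> {1..k}" and a2: "?g a = Min (?g ` {1..k})" by auto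
  have a: "a \<in> {1..k}" "\<forall>b\<in>{1..k}. ?g a \<le> ?g b"
    using a1 a2 Min_le[OF fin(1)] by auto
  hence ex: "\<exists>a. 1 \<le> a \<and> a \<le> k \<and> (\<forall>b\<in>{1..k}. ?g a \<le> ?g b)" by auto
  show ?thesis
    using LeastI_ex[OF ex] assms unfolding aopt_def by simp
qed

lemma aopt_le: "aopt M \<sigma> F k T \<le> k"
  using aopt_prop[of k M \<sigma> F T] by (cases "k = 0") (auto simp: aopt_def)

lemma step_mono:
  assumes ps: "poisson_arrivals M l \<sigma>" and sc: "strictly_convex_on {0..} F"
    and Fnn: "\<forall>x\<ge>0. F x \<ge> 0" and F0: "F 0 = 0" and k: "1 \<le> k"
  shows "k - aopt M \<sigma> F k T \<le> Suc k - aopt M \<sigma> F (Suc k) T"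
proof (rule ccontr)
  let ?V = "\<lambda>j. enn2real (vfun M \<sigma> F j T)"
  have V: "vfun M \<sigma> F j T = ennreal (?V j)" for j using vfun_real[where F=F and j=j and T=T, OF ps F0] .
  have Vnn: "?V j \<ge> 0" for j by simp
  define a where "a = aopt M \<sigma> F k T"
  define a' where "a' = aopt M \<sigma> F (Suc k) T"
  assume "\<not> ?thesis"
  hence lt: "Suc k - a' < k - a" by (simp add: a_def a'_def)
  have pa: "1 \<le> a" "a \<le> k" "\<forall>b\<in>{1..k}. vfun M \<sigma> F (k - a) T + ennreal (F (real a))
                     \<le> vfun M \<sigma> F (k - b) T + ennreal (F (real b))"
    using aopt_prop[OF k, of M \<sigma> F T] unfolding a_def by auto
  have pa': "1 \<le> a'" "a' \<le> Suc k" "\<forall>b\<in>{1..Suc k}. vfun M \<sigma> F (Suc k - a') T + ennreal (F (real a'))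
                     \<le> vfun M \<sigma> F (Suc k - b) T + ennreal (F (real b))"
    using aopt_prop[of "Suc k" M \<sigma> F T] unfolding a'_def by auto
  have aa: "a + 2 \<le> a'" using lt pa pa' by linarith
  have i1: "vfun M \<sigma> F (k - a) T + ennreal (F (real a))
                     \<le> vfun M \<sigma> F (k - (a'-1)) T + ennreal (F (real (a'-1)))"
  proof -
    have "a'-1 \<in> {1..k}" using aa pa' pa(1) by auto
    thus ?thesis using pa(3) by blast
  qed
  have i2: "vfun M \<sigma> F (Suc k - a') T + ennreal (F (real a'))
                     \<le> vfun M \<sigma> F (Suc k - (a+1)) T + ennreal (F (real (a+1)))"
  proof -
    have "a+1 \<in> {1..Suc k}" using pa by auto
    thus ?thesis using pa'(3) by blast
  qed
  have e1: "k - (a'-1) = Suc k - a'" using aa pa' by simp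
  have e2: "Suc k - (a+1) = k - a" by simp
  have F0: "F (real n) \<ge> 0" for n using Fnn by simp
  have E: "ennreal (?V x + F (real b)) = vfun M \<sigma> F x T + ennreal (F (real b))" for x b
    by (subst ennreal_plus) (simp_all add: F0 V[symmetric])
  have r1: "?V (k-a) + F (real a) \<le> ?V (Suc k - a') + F (real (a'-1))"
  proof -
    have "ennreal (?V (k-a) + F (real a)) \<le> ennreal (?V (Suc k - a') + F (real (a'-1)))"
      unfolding E using i1 e1 by simp
    thus ?thesis using F0 Vnn ennreal_le_iff add_nonneg_nonneg by blast
  qed
  have r2: "?V (Suc k - a') + F (real a') \<le> ?V (k-a) + F (real (a+1))"
  proof -
    have "ennreal (?V (Suc k - a') + F (real a')) \<le> ennreal (?V (k-a) + F (real (a+1)))"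
      unfolding E using i2 e2 by simp
    thus ?thesis using F0 Vnn ennreal_le_iff add_nonneg_nonneg by blast
  qed
  have "F (real a + 1) + F (real (a'-1)) < F (real a) + F (real (a'-1) + 1)"
    using convex_incr[OF sc, of "real a" "real (a'-1)"] aa by simp
  moreover have "F (real (a'-1) + 1) = F (real a')" using aa by (simp add: of_nat_diff)
  moreover have "F (real (a+1)) = F (real a + 1)" by (simp add: add.commute)
  ultimately show False using r1 r2 by linarith
qed

lemma mono_f:
  assumes ps: "poisson_arrivals M l \<sigma>" and sc: "strictly_convex_on {0..} F"
    and Fnn: "\<forall>x\<ge>0. F x \<ge> 0" and F0: "F 0 = 0" and le: "x \<le> y"
  shows "x - aopt M \<sigma> F x T \<le> y - aopt M \<sigma> F y T"
  using le
proof (induction y)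
  case 0 thus ?case by simp
next
  case (Suc y)
  show ?case
  proof (cases "x = Suc y")
    case True thus ?thesis by simp
  next
    case False
    hence "x \<le> y" using Suc by simp
    hence h: "x - aopt M \<sigma> F x T \<le> y - aopt M \<sigma> F y T" using Suc by simp
    show ?thesis
    proof (cases "y = 0")
      case True thus ?thesis using h by (simp add: aopt_def)
    next
      case False
      thus ?thesis using h step_mono[OF ps sc Fnn F0, of y T] by simp
    qed
  qed
qed

theorem lemma2p5:
  fixes M :: "'a measure" and l T :: real and \<sigma> :: "nat \<Rightarrow> 'a \<Rightarrow> real"
    and F :: "real \<Rightarrow> real" and k m :: nat
  assumes "poisson_arrivals M l \<sigma>"
    and "strict_mono_on {0..} F" and "strictly_convex_on {0..} F" and "F 0 = 0"
    and "\<forall>x\<ge>0. F x \<ge> 0"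
    and "T \<ge> 0" and "1 \<le> k" and "k \<le> m"
  shows "AE \<omega> in M. \<forall>t\<in>{0..T}. xiproc M \<sigma> F k T t \<omega> \<le> xiproc M \<sigma> F m T t \<omega>"
proof -
  note ps = assms(1)
  have inv: "invseq M \<sigma> F k T \<omega> i \<le> invseq M \<sigma> F m T \<omega> i" for \<omega> i
  proof (induction i)
    case 0 thus ?case using assms by simp
  next
    case (Suc i)
    thus ?case using mono_f[OF ps assms(3) assms(5) assms(4) Suc.IH] by (simp add: Let_def)
  qed
  show ?thesis unfolding xiproc_def using inv by simp
qed

end
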